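(* Every point of the interval $[m,M]$ is an accumulation point of $(b_n)_{n\ge1}$, where $m=\inf\{b_n:n\ge1\}$ and $M=\sup\{b_n:n\ge1\}$. In particular $(b_n)_{n\ge1}$ is dense in $[m,M]$ and its set of accumulation points is exactly $[m,M]$.
   Context: Fix integers $p\ge 3$ and $2\le s<p$, and a set $A\subset\{0,1,\dots,p-1\}$ with $\#A=s$. Let $h:\{0,1,\dots,s-1\}\to A$ be the unique strictly increasing bijection. For a positive integer $n$ with base-$s$ expansion $n=\sum_{i=0}^k\varepsilon_i s^i$ ($\varepsilon_i\in\{0,\dots,s-1\}$, $\varepsilon_k\ne 0$), put $a_n=\sum_{i=0}^k h(\varepsilon_i)p^i$. Let $b_n=a_n/n^{\log_s p}$ for $n\ge1$. An accumulation point of $(b_n)$ is a limit of $b_{n_k}$ along a strictly increasing sequence of indices $(n_k)$. *)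

theory Defs
  imports "HOL-Analysis.Analysis"
begin

definition digit :: "nat \<Rightarrow> nat \<Rightarrow> nat \<Rightarrow> nat" where
  "digit s n i = (n div s ^ i) mod s"

text \<open>a_n = sum over i = 0..k of h(eps_i) p^i, where k is the index of the leading
  base-s digit, i.e. the indices i range over those with s^i \<le> n.\<close>
definition aseq :: "nat \<Rightarrow> nat \<Rightarrow> (nat \<Rightarrow> nat) \<Rightarrow> nat \<Rightarrow> nat" where
  "aseq p s h n = (\<Sum>i\<in>{i. s ^ i \<le> n}. h (digit s n i) * p ^ i)"

definition bseq :: "nat \<Rightarrow> nat \<Rightarrow> (nat \<Rightarrow> nat) \<Rightarrow> nat \<Rightarrow> real" where
  "bseq p s h n = real (aseq p s h n) / real n powr (log (real s) (real p))"

definition acc_point :: "(nat \<Rightarrow> real) \<Rightarrow> real \<Rightarrow> bool" where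
  "acc_point b x \<longleftrightarrow> (\<exists>r. strict_mono r \<and> (\<forall>k. 1 \<le> r k) \<and> (\<lambda>k. b (r k)) \<longlonglongrightarrow> x)"

end

theory Submission
  imports Defs
begin

locale dig =
  fixes p s :: nat and h :: "nat \<Rightarrow> nat"
  assumes s2: "2 \<le> s" and sp: "s < p"
    and hlt: "\<And>j. j < s \<Longrightarrow> h j < p"
    and hmono: "strict_mono_on {0..<s} h"
begin

abbreviation "a \<equiv> aseq p s h"
abbreviation "b \<equiv> bseq p s h"

lemma i_less_pow: "i < s ^ i"
proof -
  have "i < 2 ^ i" by (rule less_exp)
  also have "(2::nat) ^ i \<le> s ^ i" using s2 by (simp add: power_mono)
  finally show ?thesis .
qed

lemma fin: "finite {i. s ^ i \<le> n}"
proof (rule finite_subset[of _ "{..<Suc n}"])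
  show "{i. s ^ i \<le> n} \<subseteq> {..<Suc n}" using i_less_pow
    by (auto simp: less_Suc_eq_le) (meson le_trans less_imp_le_nat not_less)
qed auto

lemma digit0: "j < s \<Longrightarrow> digit s (s*n+j) 0 = j"
  by (simp add: digit_def)

lemma digitS: "j < s \<Longrightarrow> digit s (s*n+j) (Suc i) = digit s n i"
proof -
  assume j: "j < s"
  have "(s*n+j) div s = n" using j s2 by simp
  then show ?thesis by (simp add: digit_def div_mult2_eq)
qed

lemma setrec:
  assumes j: "j < s" and pos: "1 \<le> s*n+j"
  shows "{i. s^i \<le> s*n+j} = insert 0 (Suc ` {i. s^i \<le> n})"
proof (intro set_eqI iffI)
  fix i assume "i \<in> {i. s^i \<le> s*n+j}"
  then have i: "s^i \<le> s*n+j" by simp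
  show "i \<in> insert 0 (Suc ` {i. s^i \<le> n})"
  proof (cases i)
    case (Suc k)
    have "s^k \<le> n"
    proof (rule ccontr)
      assume "\<not> s^k \<le> n"
      then have "n + 1 \<le> s^k" by simp
      then have "s*(n+1) \<le> s * s ^ k" by (rule mult_le_mono2)
      then show False using i Suc j by simp
    qed
    then show ?thesis using Suc by auto
  qed simp
next
  fix i assume "i \<in> insert 0 (Suc ` {i. s^i \<le> n})"
  then show "i \<in> {i. s^i \<le> s*n+j}"
  proof
    assume "i = 0" then show ?thesis using pos by simp
  next
    assume "i \<in> Suc ` {i. s^i \<le> n}"
    then obtain k where "i = Suc k" "s^k \<le> n" by auto
    then show ?thesis by (simp add: trans_le_add1)
  qed
qed

lemma arec:
  assumes j: "j < s" and pos: "1 \<le> s*n+j"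
  shows "a (s*n+j) = p * a n + h j"
proof -
  have "a (s*n+j) = (\<Sum>i\<in>insert 0 (Suc ` {i. s^i \<le> n}). h (digit s (s*n+j) i) * p ^ i)"
    unfolding aseq_def using setrec[OF j pos] by simp
  also have "\<dots> = h j + (\<Sum>i\<in>Suc ` {i. s^i \<le> n}. h (digit s (s*n+j) i) * p ^ i)"
    using fin[of n] digit0[OF j] by (subst sum.insert) auto
  also have "(\<Sum>i\<in>Suc ` {i. s^i \<le> n}. h (digit s (s*n+j) i) * p ^ i)
      = (\<Sum>i\<in>{i. s^i \<le> n}. h (digit s (s*n+j) (Suc i)) * p ^ Suc i)"
    by (subst sum.reindex) auto
  also have "\<dots> = p * a n"
    unfolding aseq_def using digitS[OF j] by (simp add: sum_distrib_left algebra_simps)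
  finally show ?thesis by simp
qed

lemma a0: "a 0 = 0" using s2 by (simp add: aseq_def)


lemma hle: "j < s \<Longrightarrow> i < j \<Longrightarrow> h i < h j"
  using hmono by (auto simp: strict_mono_on_def)

lemma asmall: "1 \<le> j \<Longrightarrow> j < s \<Longrightarrow> a j = h j"
  using arec[of j 0] a0 by simp

lemma a_Suc: "a n < a (Suc n)"
proof (induction n rule: less_induct)
  case (less n)
  define q where "q = n div s"
  define j where "j = n mod s"
  have n: "n = s*q + j" unfolding q_def j_def by simp
  have js: "j < s" unfolding j_def using s2 by simp
  show ?case
  proof (cases "j < s - 1")
    case True
    have n1: "Suc n = s*q + (j+1)" using n by simp
    show ?thesis
    proof (cases "q = 0")
      case True
      show ?thesis
      proof (cases "j = 0")
        case True
        then show ?thesis using \<open>q=0\<close> n a0 asmall[of 1] hle[of 1 0] s2 by simp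
      next
        case False
        then show ?thesis using \<open>q=0\<close> n asmall[of j] asmall[of "j+1"] hle[of "j+1" j] \<open>j < s - 1\<close>
          by simp
      qed
    next
      case False
      have pos: "1 \<le> s*q + j" using False s2 by (simp add: Suc_le_eq)
      have "a n = p * a q + h j" using n arec[OF js pos] by simp
      moreover have "a (Suc n) = p * a q + h (j+1)" using n1 arec[of "j+1" q] True False by simp
      moreover have "h j < h (j+1)" using hle[of "j+1" j] True by simp
      ultimately show ?thesis by simp
    qed
  next
    case False
    then have jj: "j = s - 1" using js by simp
    have n1: "Suc n = s*(q+1) + 0" using n jj s2 by simp
    have an: "a n = p * a q + h (s-1)" using n jj arec[of "s-1" q] s2 by simp
    have an1: "a (Suc n) = p * a (q+1) + h 0" using n1 arec[of 0 "q+1"] s2 by simp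
    have "q \<le> s*q" using s2 by simp
    then have "q < n" using n jj s2 by linarith
    then have "a q < a (Suc q)" using less.IH by blast
    then have "p * (a q + 1) \<le> p * a (q+1)" by (intro mult_le_mono2) simp
    moreover have "h (s-1) < p" using hlt s2 by simp
    ultimately show ?thesis using an an1 by (simp add: algebra_simps)
  qed
qed

lemma a_mono_strict: "strict_mono a"
  using a_Suc by (simp add: strict_mono_Suc_iff)

lemma a_mono: "m \<le> n \<Longrightarrow> a m \<le> a n"
  using a_mono_strict by (simp add: strict_mono_less_eq)


definition "al = log (real s) (real p)"

lemma al_pos: "al > 0" unfolding al_def using s2 sp by simp

lemma spow: "real s powr al = real p"
  unfolding al_def using s2 sp by simp

lemma multpow: "real (s*n) powr al = real p * real n powr al"
  by (simp add: powr_mult spow)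

lemma bdef: "b n = real (a n) / real n powr al"
  by (simp add: bseq_def al_def)

lemma upper: "1 \<le> n \<Longrightarrow> real (a n) + 1 \<le> real p * real n powr al"
proof (induction n rule: less_induct)
  case (less n)
  show ?case
  proof (cases "n < s")
    case True
    have "a n = h n" using asmall less.prems True by simp
    then have "real (a n) + 1 \<le> real p" using hlt[OF True] by simp
    moreover have "1 \<le> real n powr al" using less.prems al_pos by (simp add: ge_one_powr_ge_zero)
    ultimately have "real p * 1 \<le> real p * real n powr al" by (intro mult_left_mono) auto
    with \<open>real (a n) + 1 \<le> real p\<close> show ?thesis by linarith
  next
    case False
    define q where "q = n div s"
    define j where "j = n mod s"
    have n: "n = s*q + j" unfolding q_def j_def by simp
    have js: "j < s" unfolding j_def using s2 by simp
    have q1: "1 \<le> q" unfolding q_def using False s2 by (simp add: div_greater_zero_iff Suc_le_eq)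
    have qn: "q < n" unfolding q_def using s2 less.prems by simp
    have pos: "1 \<le> s*q+j" using q1 s2 by (simp add: Suc_le_eq)
    have an: "a n = p * a q + h j" using arec[OF js pos] n by simp
    have "h j + 1 \<le> p" using hlt[OF js] by simp
    then have "real (h j) + 1 \<le> real p" by (metis of_nat_1 of_nat_add of_nat_le_iff)
    then have "real (a n) + 1 \<le> real p * (real (a q) + 1)" using an by (simp add: algebra_simps)
    also have "\<dots> \<le> real p * (real p * real q powr al)" using less.IH[OF qn q1] by (intro mult_left_mono) auto
    also have "\<dots> = real p * real (s*q) powr al" by (simp only: multpow)
    also have "\<dots> \<le> real p * real n powr al" using n al_pos by (intro mult_left_mono powr_mono2) auto
    finally show ?thesis .
  qed
qed

lemma b_nonneg: "0 \<le> b n" by (simp add: bdef)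

lemma b_le: "b n \<le> real p"
proof (cases "n = 0")
  case True then show ?thesis by (simp add: bdef)
next
  case False
  then have "real (a n) \<le> real p * real n powr al" using upper[of n] by simp
  moreover have "real n powr al > 0" using False by simp
  ultimately show ?thesis by (simp add: bdef pos_divide_le_eq mult.commute)
qed

lemma b_s: "1 \<le> n \<Longrightarrow> b n \<le> b (s*n)"
proof -
  assume n: "1 \<le> n"
  have "a (s*n + 0) = p * a n + h 0" using arec[of 0 n] n s2 by simp
  then have "real (a (s*n)) \<ge> real p * real (a n)" by simp
  moreover have "real n powr al > 0" using n by simp
  ultimately have "real p * real (a n) / (real p * real n powr al) \<le> real (a (s*n)) / (real p * real n powr al)"
    using sp by (intro divide_right_mono) auto
  moreover have "real p * real (a n) / (real p * real n powr al) = real (a n) / real n powr al"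
    using sp by simp
  ultimately show ?thesis unfolding bdef multpow by simp
qed

lemma b_spow: "1 \<le> n \<Longrightarrow> b n \<le> b (n * s^i)"
proof (induction i)
  case (Suc i)
  have "1 \<le> n * s ^ i" using Suc.prems s2 by simp
  then have "b (n * s ^ i) \<le> b (s * (n * s ^ i))" by (rule b_s)
  then show ?case using Suc by (simp add: algebra_simps)
qed simp

lemma b_step: "1 \<le> n \<Longrightarrow> b n * (real n / (real n + 1)) powr al \<le> b (Suc n)"
proof -
  assume n: "1 \<le> n"
  have "real (a n) \<le> real (a (Suc n))" using a_mono[of n "Suc n"] by simp
  moreover have "(real n / (real n + 1)) powr al = real n powr al / (real n + 1) powr al"
    by (simp add: powr_divide)
  moreover have "real n powr al > 0" using n by simp
  moreover have "(real n + 1) powr al > 0" by simp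
  ultimately have "b n * (real n / (real n + 1)) powr al = real (a n) / (real n + 1) powr al"
    unfolding bdef by simp
  also have "\<dots> \<le> real (a (Suc n)) / (real n + 1) powr al"
    using \<open>real (a n) \<le> real (a (Suc n))\<close> by (intro divide_right_mono) auto
  also have "\<dots> = b (Suc n)" unfolding bdef by (simp add: add.commute)
  finally show ?thesis .
qed


definition "H = real (h (s-1)) / (real p - 1)"

lemma H_bounds: "0 \<le> H" "H \<le> 1"
proof -
  have "h (s-1) < p" using hlt s2 by simp
  then have "real (h (s-1)) \<le> real p - 1" by linarith
  moreover have "real p - 1 > 0" using sp s2 by simp
  ultimately show "0 \<le> H" "H \<le> 1" unfolding H_def by auto
qed

lemma etail: "1 \<le> q \<Longrightarrow> real (a (q * s ^ j - 1)) + H = real p ^ j * (real (a (q-1)) + H)"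
proof (induction j)
  case (Suc j)
  have ge: "1 \<le> q * s^j" using Suc.prems s2 by simp
  have eq: "q * s ^ Suc j - 1 = s * (q * s^j - 1) + (s - 1)"
  proof -
    have "q * s ^ Suc j = s * (q * s^j)" by simp
    then show ?thesis using ge s2
      by (metis (no_types, lifting) Nat.add_diff_assoc2 Suc_diff_le add.commute
          diff_Suc_1 le_add_diff_inverse2 mult_Suc_right one_le_numeral le_trans mult_eq_if)
  qed
  have pos: "1 \<le> s * (q * s^j - 1) + (s - 1)" using s2 by simp
  have "a (q * s ^ Suc j - 1) = p * a (q * s^j - 1) + h (s-1)"
    unfolding eq using arec[OF _ pos] s2 by simp
  then have "real (a (q * s ^ Suc j - 1)) + H = real p * (real (a (q * s^j - 1)) + H)
      + (real (h (s-1)) - (real p - 1) * H)" by (simp add: algebra_simps)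
  moreover have "real (h (s-1)) - (real p - 1) * H = 0" unfolding H_def using sp s2 by simp
  ultimately show ?case using Suc.IH[OF Suc.prems] by simp
qed simp

lemma atail: "1 \<le> q \<Longrightarrow> real (a (q * s ^ j - 1)) \<le> real p ^ j * real (a q)"
proof -
  assume q: "1 \<le> q"
  have "a (q-1) < a q" using a_Suc[of "q-1"] q by simp
  then have "real (a (q-1)) + H \<le> real (a q)" using H_bounds by linarith
  then have "real p ^ j * (real (a (q-1)) + H) \<le> real p ^ j * real (a q)"
    by (intro mult_left_mono) auto
  then show ?thesis using etail[OF q, of j] H_bounds by linarith
qed

lemma powpow: "(real s ^ j) powr al = real p ^ j"
proof (induction j)
  case (Suc j)
  have "(real s ^ Suc j) powr al = real s powr al * (real s ^ j) powr al"
    by (simp add: powr_mult)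
  then show ?case using Suc spow by simp
qed simp

lemma btail:
  assumes q: "1 \<le> q" and j: "1 \<le> j"
  shows "b (q * s ^ j - 1) \<le> real (a q) / (real q - (1/real s)^j) powr al"
proof -
  have sj: "2 \<le> s^j" using s2 j
    by (metis le_trans power_increasing power_one_right less_imp_le_nat one_le_numeral
        Suc_leD numeral_2_eq_2 not_less_eq_eq)
  then have "2 \<le> q * s^j" using q
    by (metis le_trans mult_le_mono1 mult_1)
  then have "real (q * s ^ j - 1) = real (q * s ^ j) - real 1"
    by (intro of_nat_diff) (use q sj in simp)
  then have "real (q * s ^ j - 1) = real q * real s ^ j - 1" by simp
  moreover have "real s ^ j * (1/real s)^j = 1" using s2 by (simp add: power_one_over)
  ultimately have rv: "real (q * s ^ j - 1) = real s ^ j * (real q - (1/real s)^j)"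
    by (simp add: algebra_simps)
  have X: "real q - (1/real s)^j > 0"
  proof -
    have "(1/real s)^j \<le> 1/real s" using power_decreasing[of 1 j "1/real s"] s2 j by simp
    also have "\<dots> < 1" using s2 by simp
    finally show ?thesis using q by linarith
  qed
  have den: "real (q * s ^ j - 1) powr al = real p ^ j * (real q - (1/real s)^j) powr al"
    unfolding rv using X by (simp add: powr_mult powpow)
  have dpos: "(real q - (1/real s)^j) powr al > 0" using X by simp
  have pj: "real p ^ j > 0" using sp by simp
  have "b (q * s ^ j - 1) = real (a (q * s ^ j - 1)) / (real p ^ j * (real q - (1/real s)^j) powr al)"
    unfolding bdef den ..
  also have "\<dots> \<le> real p ^ j * real (a q) / (real p ^ j * (real q - (1/real s)^j) powr al)"
    using atail[OF q, of j] dpos pj by (intro divide_right_mono) auto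
  also have "\<dots> = real (a q) / (real q - (1/real s)^j) powr al"
    by (rule mult_divide_mult_cancel_left) (use pj in simp)
  finally show ?thesis .
qed


lemma bdd_ab: "bdd_above (b ` {1..})" unfolding bdd_above_def using b_le by auto
lemma bdd_be: "bdd_below (b ` {1..})" unfolding bdd_below_def using b_nonneg by auto
lemma ne: "b ` {1..} \<noteq> {}" by auto

lemma ratio_lim: "((\<lambda>n. (real n / (real n + 1)) powr al) \<longlongrightarrow> 1) sequentially"
proof -
  have "((\<lambda>n. (real n / real (Suc n)) powr al) \<longlongrightarrow> 1 powr al) sequentially"
    by (rule tendsto_powr[OF LIMSEQ_n_over_Suc_n tendsto_const]) simp
  then show ?thesis by (simp add: add.commute)
qed

lemma tail_lim: "1 \<le> q \<Longrightarrow> ((\<lambda>j. (real q - (1/real s)^j) powr al) \<longlongrightarrow> real q powr al) sequentially"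
proof -
  assume q: "1 \<le> q"
  have "(\<lambda>j. (1/real s)^j) \<longlonglongrightarrow> 0" using s2 by (intro LIMSEQ_power_zero) simp
  then have "(\<lambda>j. real q - (1/real s)^j) \<longlonglongrightarrow> real q - 0" by (intro tendsto_diff tendsto_const)
  then show ?thesis using q by (intro tendsto_powr tendsto_const) auto
qed

lemma key:
  assumes my: "Inf (b ` {1..}) < y" and yM: "y < Sup (b ` {1..})" and e: "\<epsilon> > 0"
  shows "\<exists>n>N. \<bar>b n - y\<bar> < \<epsilon>"
proof -
  have "0 \<le> Inf (b ` {1..})" using b_nonneg by (intro cInf_greatest ne) auto
  then have y0: "y > 0" using my by simp
  obtain n1 where n1: "1 \<le> n1" "y < b n1" using yM less_cSup_iff[OF ne bdd_ab] by auto
  obtain q where q: "1 \<le> q" "b q < y" using my cInf_less_iff[OF ne bdd_be] by auto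
  have "eventually (\<lambda>n. (real n / (real n + 1)) powr al > 1 - \<epsilon>/y) sequentially"
    using ratio_lim y0 e by (intro order_tendstoD(1)) auto
  then obtain N0 where N0: "\<And>n. n \<ge> N0 \<Longrightarrow> (real n / (real n + 1)) powr al > 1 - \<epsilon>/y"
    by (auto simp: eventually_sequentially)
  define K where "K = max N N0 + 1"
  define u where "u = n1 * s ^ K"
  have "K < s ^ K" by (rule i_less_pow)
  moreover have "s ^ K \<le> n1 * s ^ K" using n1 by simp
  ultimately have uK: "K < u" unfolding u_def by linarith
  have bu: "y < b u" unfolding u_def using b_spow[OF n1(1), of K] n1 by simp
  have qpos: "real q powr al > 0" using q by simp
  have "real (a q) / y < real q powr al"
    using q(2) qpos y0 unfolding bdef by (simp add: divide_simps mult.commute)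
  then have ev1: "eventually (\<lambda>j. (real q - (1/real s)^j) powr al > real (a q) / y) sequentially"
    using tail_lim[OF q(1)] by (intro order_tendstoD(1)) auto
  have ev2: "eventually (\<lambda>j. j > u) sequentially" by (rule eventually_gt_at_top)
  obtain j where j1: "(real q - (1/real s)^j) powr al > real (a q) / y" and j2: "j > u"
    using eventually_conj[OF ev1 ev2] by (auto simp: eventually_sequentially)
  define v where "v = q * s ^ j - 1"
  have j1': "1 \<le> j" using j2 by simp
  have "j < s ^ j" by (rule i_less_pow)
  moreover have "s ^ j \<le> q * s ^ j" using q(1) by simp
  ultimately have "j \<le> q * s ^ j - 1" by linarith
  then have uv: "u < v" unfolding v_def using j2 by simp
  have Xpos: "(real q - (1/real s)^j) powr al > 0"
  proof -
    have "real (a q) / y \<ge> 0" using y0 by simp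
    then show ?thesis using j1 by linarith
  qed
  have "b v \<le> real (a q) / (real q - (1/real s)^j) powr al" unfolding v_def by (rule btail[OF q(1) j1'])
  also have "\<dots> < y" using j1 Xpos y0 by (simp add: divide_simps mult.commute)
  finally have bv: "b v < y" .
  define T where "T = {t. u \<le> t \<and> t < v \<and> y \<le> b t}"
  have Tfin: "finite T" unfolding T_def by (rule finite_subset[of _ "{..<v}"]) auto
  have uT: "u \<in> T" unfolding T_def using uv bu by auto
  define t where "t = Max T"
  have tT: "t \<in> T" unfolding t_def using Tfin uT by (intro Max_in) auto
  have tmax: "\<And>x. x \<in> T \<Longrightarrow> x \<le> t" unfolding t_def using Tfin by auto
  from tT have tu: "u \<le> t" and tv: "t < v" and yt: "y \<le> b t" unfolding T_def by auto
  have bt1: "b (Suc t) < y"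
  proof (cases "Suc t = v")
    case True then show ?thesis using bv by simp
  next
    case False
    then have "Suc t < v" using tv by simp
    moreover have "Suc t \<notin> T" using tmax by fastforce
    ultimately show ?thesis unfolding T_def using tu by auto
  qed
  have t1: "1 \<le> t" and tN0: "t \<ge> N0" and tN: "t > N" using tu uK unfolding K_def by auto
  define r where "r = (real t / (real t + 1)) powr al"
  have r: "r > 1 - \<epsilon>/y" unfolding r_def using N0[OF tN0] .
  have r0: "r \<ge> 0" unfolding r_def by simp
  have "y * r \<le> b t * r" using yt r0 by (intro mult_right_mono) auto
  also have "\<dots> \<le> b (Suc t)" unfolding r_def by (rule b_step[OF t1])
  finally have "y * r \<le> b (Suc t)" .
  moreover have "y * r > y * (1 - \<epsilon>/y)" using r y0 by (intro mult_strict_left_mono) auto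
  moreover have "y * (1 - \<epsilon>/y) = y - \<epsilon>" using y0 by (simp add: algebra_simps)
  ultimately have "b (Suc t) > y - \<epsilon>" by linarith
  then have "\<bar>b (Suc t) - y\<bar> < \<epsilon>" using bt1 by linarith
  then show ?thesis using tN by (intro exI[of _ "Suc t"]) auto
qed


lemma approx:
  assumes y: "Inf (b ` {1..}) \<le> y" "y \<le> Sup (b ` {1..})" and e: "\<epsilon> > 0"
  shows "\<exists>n>N. \<bar>b n - y\<bar> < \<epsilon>"
proof -
  define m where "m = Inf (b ` {1..})"
  define M where "M = Sup (b ` {1..})"
  have bm: "\<And>n. 1 \<le> n \<Longrightarrow> m \<le> b n \<and> b n \<le> M" unfolding m_def M_def
    using cInf_lower[OF _ bdd_be] cSup_upper[OF _ bdd_ab] by auto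
  show ?thesis
  proof (cases "m < M")
    case False
    then have "b (Suc N) = y" using bm[of "Suc N"] y unfolding m_def[symmetric] M_def[symmetric] by linarith
    then show ?thesis using e by (intro exI[of _ "Suc N"]) auto
  next
    case True
    define d where "d = min (\<epsilon>/2) ((M-m)/4)"
    have d: "d > 0" "d \<le> \<epsilon>/2" "d \<le> (M-m)/4" unfolding d_def using e True by (auto simp: min_def)
    define y' where "y' = (if y < (m+M)/2 then y + d else y - d)"
    have y'1: "m < y'" "y' < M" "\<bar>y' - y\<bar> \<le> \<epsilon>/2"
      using y d unfolding y'_def m_def[symmetric] M_def[symmetric] by auto
    obtain n where "n > N" "\<bar>b n - y'\<bar> < \<epsilon>/2"
      using key[of y' "\<epsilon>/2" N] y'1 e unfolding m_def M_def by auto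
    moreover have "\<bar>b n - y\<bar> < \<epsilon>" using y'1 \<open>\<bar>b n - y'\<bar> < \<epsilon>/2\<close> by linarith
    ultimately show ?thesis by blast
  qed
qed

lemma acc_of:
  assumes H: "\<And>\<epsilon> N. \<epsilon> > 0 \<Longrightarrow> \<exists>n>N. \<bar>b n - y\<bar> < \<epsilon>"
  shows "acc_point b y"
proof -
  define P where "P = (\<lambda>k x. 1 \<le> x \<and> \<bar>b x - y\<bar> < inverse (real (Suc k)))"
  have "\<exists>f. \<forall>k. P k (f k) \<and> f k < f (Suc k)"
  proof (rule dependent_nat_choice)
    show "\<exists>x. P 0 x" using H[of 1 0] unfolding P_def by (auto simp: Suc_le_eq)
  next
    fix x k assume "P k x"
    obtain n where "n > x" "\<bar>b n - y\<bar> < inverse (real (Suc (Suc k)))"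
      using H[of "inverse (real (Suc (Suc k)))" x] by auto
    then show "\<exists>n. P (Suc k) n \<and> x < n" unfolding P_def by (intro exI[of _ n]) auto
  qed
  then obtain r where r: "\<And>k. P k (r k)" "\<And>k. r k < r (Suc k)" by blast
  have sm: "strict_mono r" using r(2) by (simp add: strict_mono_Suc_iff)
  have "(\<lambda>k. b (r k)) \<longlonglongrightarrow> y"
  proof (rule tendsto_sandwich)
    show "eventually (\<lambda>k. y - inverse (real (Suc k)) \<le> b (r k)) sequentially"
      using r(1) unfolding P_def by (intro always_eventually allI) (smt (verit))
    show "eventually (\<lambda>k. b (r k) \<le> y + inverse (real (Suc k))) sequentially"
      using r(1) unfolding P_def by (intro always_eventually allI) (smt (verit))
    have "(\<lambda>k. y - inverse (real (Suc k))) \<longlonglongrightarrow> y - 0"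
      by (intro tendsto_diff tendsto_const LIMSEQ_inverse_real_of_nat)
    then show "(\<lambda>k. y - inverse (real (Suc k))) \<longlonglongrightarrow> y" by simp
    have "(\<lambda>k. y + inverse (real (Suc k))) \<longlonglongrightarrow> y + 0"
      by (intro tendsto_add tendsto_const LIMSEQ_inverse_real_of_nat)
    then show "(\<lambda>k. y + inverse (real (Suc k))) \<longlonglongrightarrow> y" by simp
  qed
  then show ?thesis unfolding acc_point_def using sm r(1) unfolding P_def by blast
qed

lemma acc_in:
  assumes "acc_point b x"
  shows "Inf (b ` {1..}) \<le> x \<and> x \<le> Sup (b ` {1..})"
proof -
  obtain r where r: "strict_mono r" "\<And>k. 1 \<le> r k" "(\<lambda>k. b (r k)) \<longlonglongrightarrow> x"
    using assms unfolding acc_point_def by blast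
  have "\<And>k. Inf (b ` {1..}) \<le> b (r k)" using r(2) by (intro cInf_lower[OF _ bdd_be]) auto
  moreover have "\<And>k. b (r k) \<le> Sup (b ` {1..})" using r(2) by (intro cSup_upper[OF _ bdd_ab]) auto
  ultimately show ?thesis using r(3)
    by (meson LIMSEQ_le_const LIMSEQ_le_const2)
qed

end

theorem theorem2:
  fixes p s :: nat and A :: "nat set" and h :: "nat \<Rightarrow> nat"
  assumes "p \<ge> 3" and "2 \<le> s" and "s < p"
    and "A \<subseteq> {0..<p}" and "card A = s"
    and "strict_mono_on {0..<s} h" and "bij_betw h {0..<s} A"
  defines "m \<equiv> Inf (bseq p s h ` {1..})" and "M \<equiv> Sup (bseq p s h ` {1..})"
  shows "(\<forall>x\<in>{m..M}. acc_point (bseq p s h) x) \<and> {x. acc_point (bseq p s h) x} = {m..M}"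
proof -
  have hlt: "\<And>j. j < s \<Longrightarrow> h j < p"
    using assms(4,7) unfolding bij_betw_def by force
  interpret dig p s h using assms(2,3,6) hlt by unfold_locales auto
  have 1: "\<forall>x\<in>{m..M}. acc_point (bseq p s h) x"
    unfolding m_def M_def using approx by (auto intro!: acc_of)
  have 2: "{x. acc_point (bseq p s h) x} \<subseteq> {m..M}"
    unfolding m_def M_def using acc_in by auto
  show ?thesis using 1 2 by auto
qed

end
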